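(* Let $A$ be an $n\times n$ (real or complex) matrix and let $\sigma_1,\ldots,\sigma_{ns}$ be scalars such that each shifted matrix $A-\sigma_i I$ is nonsingular. Suppose that for each $i=1,\ldots,ns$ we have a current approximate solution $\tilde x_{0,i}$ to a shifted system, so that the remaining problem is $(A-\sigma_i I)(x_i-\tilde x_{0,i}) = r_{0,i}$, where the residuals satisfy $r_{0,i}=\beta_i r_{0,1}$ for scalars $\beta_i$, $i=2,\ldots,ns$ (and $\beta_1=1$). Let $z_1,\ldots,z_k$ be eigenvectors of $A$ and let $Z_k$ be the $n\times k$ matrix with columns $z_1,\ldots,z_k$. For each $i$, perform the minimum residual (minres) projection of the $i$-th system over $\mathrm{Span}\{z_1,\ldots,z_k\}$: choose $d_i$ minimizing $\|r_{0,i}-(A-\sigma_i I)Z_k d_i\|_2$, and set the new approximate solution $\tilde x_{0,i}+Z_k d_i$ with new residual $r_i = r_{0,i}-(A-\sigma_i I)Z_k d_i$. Then the new residual vectors $r_1,\ldots,r_{ns}$ are all scalar multiples of one another (they are parallel).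
   Context: This concerns solving multiply shifted linear systems $(A-\sigma_i I)x_i=b$ with a common right-hand side; $\|\cdot\|_2$ is the Euclidean norm. The minres projection over a subspace spanned by the columns of a matrix $W$ for the system $(A-\sigma I)(x-\tilde x_0)=r_0$ replaces $\tilde x_0$ by $\tilde x_0+Wd$ where $d$ minimizes $\|r_0-(A-\sigma I)Wd\|_2$. *)

theory Defs
  imports "HOL-Analysis.Analysis"
begin

text \<open>Scalars range over a field with a Euclidean-type norm; the instances of interest
  are \<open>real\<close> and \<open>complex\<close>. On \<open>'a^'n\<close> the norm is the Euclidean (2-)norm.\<close>

definition eigenvector :: "'a::field^'n^'n \<Rightarrow> 'a^'n \<Rightarrow> bool" where
  "eigenvector A z \<longleftrightarrow> z \<noteq> 0 \<and> (\<exists>c. A *v z = c *s z)"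

definition minres_coeff ::
  "'a::{real_normed_field,real_inner}^'n^'n \<Rightarrow> 'a \<Rightarrow> 'a^'k^'n \<Rightarrow> 'a^'n \<Rightarrow> 'a^'k \<Rightarrow> bool" where
  "minres_coeff A \<sigma> W r0 d \<longleftrightarrow>
     (\<forall>e. norm (r0 - ((A - mat \<sigma>) ** W) *v d) \<le> norm (r0 - ((A - mat \<sigma>) ** W) *v e))"

definition parallel :: "'a::field^'n \<Rightarrow> 'a^'n \<Rightarrow> bool" where
  "parallel u v \<longleftrightarrow> (\<exists>c. u = c *s v) \<or> (\<exists>c. v = c *s u)"

end

theory Submission
  imports Defs
begin

lemma norm_smult_vec:
  fixes x :: "'a::real_normed_field^'n"
  shows "norm (c *s x) = norm c * norm x"
  unfolding norm_vec_def by (simp add: norm_mult L2_set_right_distrib)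

lemma scaleR_smult_vec:
  fixes x :: "'a::real_normed_field^'n"
  shows "scaleR t x = (of_real t :: 'a) *s x"
  unfolding vec_eq_iff by (simp add: of_real_def)

lemma mat_mv: fixes x :: "'a::field^'n" shows "mat c *v x = c *s x"
proof -
  have "(mat c *v x)$i = c * x$i" for i
  proof -
    have "(mat c *v x)$i = (\<Sum>j\<in>UNIV. (if i = j then c else 0) * x$j)"
      by (simp add: matrix_vector_mult_def mat_def)
    also have "\<dots> = (\<Sum>j\<in>UNIV. if i = j then c * x$j else 0)" by (intro sum.cong) auto
    also have "\<dots> = c * x$i" by simp
    finally show ?thesis .
  qed
  thus ?thesis by (simp add: vec_eq_iff)
qed

lemma e1: fixes A :: "'a::field^'n^'n" shows
 "((A - mat s) ** Z) $ p $ q = (\<Sum>k\<in>UNIV. A$p$k * Z$k$q) - s * Z $ p $ q"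
proof -
  have "((A - mat s) ** Z) $ p $ q = (\<Sum>k\<in>UNIV. A$p$k * Z$k$q - (if k = p then s * Z$k$q else 0))"
    unfolding matrix_matrix_mult_def mat_def by (auto intro!: sum.cong simp: left_diff_distrib)
  also have "\<dots> = (\<Sum>k\<in>UNIV. A$p$k * Z$k$q) - s * Z $ p $ q"
    by (simp add: sum_subtractf)
  finally show ?thesis .
qed

lemma mv_smult:
  fixes Z :: "'a::field^'k^'n"
  shows "Z *v (c *s a) = c *s (Z *v a)"
  by (simp add: vec_eq_iff matrix_vector_mult_def sum_distrib_left algebra_simps)

lemma mv_add:
  fixes Z :: "'a::field^'k^'n"
  shows "Z *v (a + b) = Z *v a + Z *v b"
  by (simp add: vec_eq_iff matrix_vector_mult_def sum.distrib algebra_simps)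

lemma parallelogram:
  fixes u v :: "'a::real_inner"
  shows "norm (u+v)^2 + norm (u-v)^2 = 2 * norm u ^2 + 2 * norm v ^2"
  by (simp add: power2_norm_eq_inner inner_add inner_diff inner_commute)

lemma unique_min:
  fixes r w w' :: "'a::{real_normed_field,real_inner}^'n"
  assumes cl: "\<And>u v. u\<in>S \<Longrightarrow> v\<in>S \<Longrightarrow> scaleR (1/2) (u+v) \<in> S"
    and wS: "w \<in> S" and w'S: "w' \<in> S"
    and m1: "\<forall>s\<in>S. norm (r-w) \<le> norm (r-s)"
    and m2: "\<forall>s\<in>S. norm (r-w') \<le> norm (r-s)"
  shows "w = w'"
proof -
  define u where "u = r - w"
  define v where "v = r - w'"
  have e: "norm u = norm v" using m1 m2 wS w'S unfolding u_def v_def by (meson antisym)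
  have mS: "scaleR (1/2) (w+w') \<in> S" using cl wS w'S by blast
  have "r - scaleR (1/2) (w+w') = scaleR (1/2) (u+v)"
  proof -
    have "r = scaleR (1/2) r + scaleR (1/2) r" by (simp flip: scaleR_add_left)
    then show ?thesis unfolding u_def v_def by (simp add: scaleR_add_right scaleR_diff_right algebra_simps)
  qed
  hence le: "norm u \<le> norm (scaleR (1/2) (u+v))" using m1 mS unfolding u_def by metis
  hence h2: "2 * norm u \<le> norm (u+v)" by simp
  have "(2 * norm u)^2 \<le> norm (u+v)^2" using power_mono[OF h2, of 2] by simp
  hence q: "4 * norm u^2 \<le> norm(u+v)^2" by (simp add: power_mult_distrib)
  have p: "norm(u+v)^2 + norm(u-v)^2 = 4 * norm u ^2" using parallelogram[of u v] e by simp
  have "norm (u-v)^2 \<le> 0" using p q by linarith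
  hence "u - v = 0" by simp
  thus ?thesis unfolding u_def v_def by simp
qed

lemma inv_inj:
  fixes M :: "'a::field^'n^'n"
  assumes "invertible M" "M *v x = 0" shows "x = 0"
proof -
  obtain M' where "M' ** M = mat 1" using assms(1) unfolding invertible_def by blast
  hence "x = M' *v (M *v x)" by (simp add: matrix_vector_mul_assoc)
  thus ?thesis using assms(2) by simp
qed


theorem theorem4p1:
  fixes A :: "'a::{real_normed_field,real_inner}^'n^'n"
    and ns :: nat
    and \<sigma> \<beta> :: "nat \<Rightarrow> 'a"
    and b :: "'a^'n"
    and x0 :: "nat \<Rightarrow> 'a^'n"
    and r0 r :: "nat \<Rightarrow> 'a^'n"
    and Z :: "'a^'k^'n"
    and d :: "nat \<Rightarrow> 'a^'k"
  assumes nonsing: "\<And>i. i \<in> {1..ns} \<Longrightarrow> invertible (A - mat (\<sigma> i))"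
    and r0_def: "\<And>i. i \<in> {1..ns} \<Longrightarrow> r0 i = b - (A - mat (\<sigma> i)) *v x0 i"
    and beta1: "\<beta> 1 = 1"
    and r0_par: "\<And>i. i \<in> {1..ns} \<Longrightarrow> r0 i = \<beta> i *s r0 1"
    and eig: "\<And>j. eigenvector A (column j Z)"
    and minres: "\<And>i. i \<in> {1..ns} \<Longrightarrow> minres_coeff A (\<sigma> i) Z (r0 i) (d i)"
    and r_def: "\<And>i. i \<in> {1..ns} \<Longrightarrow> r i = r0 i - ((A - mat (\<sigma> i)) ** Z) *v d i"
  shows "\<forall>i\<in>{1..ns}. \<forall>j\<in>{1..ns}. parallel (r i) (r j)"
proof -
  have "\<forall>j. \<exists>c. A *v column j Z = c *s column j Z" using eig unfolding eigenvector_def by blast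
  then obtain lam where lam: "\<And>j. A *v column j Z = lam j *s column j Z" by metis
  have nz: "\<And>j. column j Z \<noteq> 0" using eig unfolding eigenvector_def by blast
  define S where "S = range (\<lambda>e. Z *v e)"
  have entry: "((A - mat s) ** Z) $ p $ q = (lam q - s) * Z $ p $ q" for s p q
  proof -
    have "((A - mat s) ** Z) $ p $ q = (A *v column q Z) $ p - s * Z $ p $ q"
      by (simp add: e1 matrix_vector_mult_def column_def)
    also have "\<dots> = (lam q - s) * Z $ p $ q" by (simp only: lam) (simp add: column_def algebra_simps)
    finally show ?thesis .
  qed
  have mvM: "((A - mat s) ** Z) *v e = Z *v (\<chi> q. (lam q - s) * e $ q)" for s e
    by (simp add: vec_eq_iff matrix_vector_mult_def entry algebra_simps)
  have lne: "lam q \<noteq> \<sigma> i" if "i \<in> {1..ns}" for i q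
  proof
    assume h: "lam q = \<sigma> i"
    have "(A - mat (\<sigma> i)) *v column q Z = 0"
      by (simp add: matrix_vector_mult_diff_rdistrib lam h mat_mv)
    with inv_inj[OF nonsing[OF that]] nz show False by blast
  qed
  have rng: "range (\<lambda>e. ((A - mat (\<sigma> i)) ** Z) *v e) = S" if "i \<in> {1..ns}" for i
  proof
    show "range (\<lambda>e. ((A - mat (\<sigma> i)) ** Z) *v e) \<subseteq> S" unfolding S_def mvM by auto
    show "S \<subseteq> range (\<lambda>e. ((A - mat (\<sigma> i)) ** Z) *v e)"
    proof
      fix y assume "y \<in> S"
      then obtain e where y: "y = Z *v e" unfolding S_def by auto
      have "(\<chi> q. (lam q - \<sigma> i) * ((\<chi> q. e $ q / (lam q - \<sigma> i)) $ q)) = e"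
        using lne[OF that] by (simp add: vec_eq_iff)
      hence "y = ((A - mat (\<sigma> i)) ** Z) *v (\<chi> q. e $ q / (lam q - \<sigma> i))"
        unfolding mvM y by simp
      thus "y \<in> range (\<lambda>e. ((A - mat (\<sigma> i)) ** Z) *v e)" by blast
    qed
  qed
  have cl: "scaleR (1/2) (u+v) \<in> S" if hu: "u \<in> S" and hv: "v \<in> S" for u v
  proof -
    obtain a where a: "u = Z *v a" using hu unfolding S_def by blast
    obtain c where c: "v = Z *v c" using hv unfolding S_def by blast
    from a c have "scaleR (1/2) (u+v) = Z *v (scaleR (1/2) (a + c))"
      by (simp add: scaleR_smult_vec mv_smult mv_add)
    thus ?thesis unfolding S_def by blast
  qed
  have clm: "c *s u \<in> S" if hu: "u \<in> S" for u c
  proof -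
    obtain a where "u = Z *v a" using hu unfolding S_def by blast
    hence "c *s u = Z *v (c *s a)" by (simp add: mv_smult)
    thus ?thesis unfolding S_def by blast
  qed
  define w where "w i = ((A - mat (\<sigma> i)) ** Z) *v d i" for i
  have wS: "w i \<in> S" if "i \<in> {1..ns}" for i
    using rng[OF that] unfolding w_def by blast
  have wmin: "\<forall>s\<in>S. norm (r0 i - w i) \<le> norm (r0 i - s)" if hi: "i \<in> {1..ns}" for i
  proof
    fix s assume "s \<in> S"
    then obtain e where "s = ((A - mat (\<sigma> i)) ** Z) *v e" using rng[OF hi] by blast
    thus "norm (r0 i - w i) \<le> norm (r0 i - s)"
      using minres[OF hi] unfolding minres_coeff_def w_def by simp
  qed
  have key: "r i = \<beta> i *s r 1" if i: "i \<in> {1..ns}" for i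
  proof -
    have one: "1 \<in> {1..ns}" using i by auto
    have bS: "\<beta> i *s w 1 \<in> S" using clm wS[OF one] by blast
    have bmin: "\<forall>s\<in>S. norm (r0 i - \<beta> i *s w 1) \<le> norm (r0 i - s)"
    proof
      fix s assume sS: "s \<in> S"
      show "norm (r0 i - \<beta> i *s w 1) \<le> norm (r0 i - s)"
      proof (cases "\<beta> i = 0")
        case True thus ?thesis by (simp add: r0_par[OF i])
      next
        case False
        have s': "inverse (\<beta> i) *s s \<in> S" using clm sS by blast
        have "norm (r0 i - \<beta> i *s w 1) = norm (\<beta> i *s (r0 1 - w 1))"
          by (simp add: r0_par[OF i] vector_ssub_ldistrib)
        also have "\<dots> = norm (\<beta> i) * norm (r0 1 - w 1)" by (rule norm_smult_vec)
        also have "\<dots> \<le> norm (\<beta> i) * norm (r0 1 - inverse (\<beta> i) *s s)"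
          using wmin[OF one] s' by (simp add: mult_left_mono)
        also have "\<dots> = norm (\<beta> i *s (r0 1 - inverse (\<beta> i) *s s))" by (rule norm_smult_vec[symmetric])
        also have "\<beta> i *s (r0 1 - inverse (\<beta> i) *s s) = r0 i - s"
          using False by (simp add: r0_par[OF i] vector_ssub_ldistrib)
        finally show ?thesis .
      qed
    qed
    have "w i = \<beta> i *s w 1"
      by (rule unique_min[OF cl wS[OF i] bS wmin[OF i] bmin])
    thus ?thesis using r_def[OF i] r_def[OF one] unfolding w_def
      by (simp add: r0_par[OF i] vector_ssub_ldistrib)
  qed
  show ?thesis
  proof (intro ballI)
    fix i j assume i: "i \<in> {1..ns}" and j: "j \<in> {1..ns}"
    show "parallel (r i) (r j)"
    proof (cases "\<beta> j = 0")
      case True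
      hence "r j = 0 *s r i" using key[OF j] by simp
      thus ?thesis unfolding parallel_def by blast
    next
      case False
      hence "r i = (\<beta> i / \<beta> j) *s r j" using key[OF i] key[OF j] by simp
      thus ?thesis unfolding parallel_def by blast
    qed
  qed
qed

end
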